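(* Let $p$ and $q$ be distinct odd primes, let $a,b$ be nonnegative integers, and set $c=\lfloor (a+1)/(b+2)\rfloor$. If $q<p^c$, then $p^aq^b$ reduces to $p^{a-c}q^{b+1}$.
   Context: For a positive integer $n$, $\mathcal{D}(n)$ is the set of positive divisors of $n$, and $\lambda(n)$ is the least prime factor of $n$ if $n\ge2$, with $\lambda(1)=1$. For positive integers $m,n$, a function $f:\mathcal{D}(n)\to\mathcal{D}(m)$ is called reducing if for all $d,d'\in\mathcal{D}(n)$: (a) $f(d)\le d$; (b) $\frac{m/f(d)}{n/d}\le\min\{1,\ \lambda(m/f(d))/\lambda(n/d)\}$; (c) if $f(d)=2^if(d')$ for some $i\in\mathbb{Z}$, then $d=2^jd'$ for some $j\in\mathbb{Z}$. We say $n$ reduces to $m$ if a reducing function $\mathcal{D}(n)\to\mathcal{D}(m)$ exists. *)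

theory Defs
  imports "HOL-Computational_Algebra.Primes" Complex_Main
begin

definition divisors_set :: "nat \<Rightarrow> nat set" where
  "divisors_set n = {d. 0 < d \<and> d dvd n}"

definition least_pf :: "nat \<Rightarrow> nat" where
  "least_pf n = (if n \<le> 1 then 1 else (LEAST p. prime p \<and> p dvd n))"

definition reducing :: "nat \<Rightarrow> nat \<Rightarrow> (nat \<Rightarrow> nat) \<Rightarrow> bool" where
  "reducing n m f \<longleftrightarrow>
     (\<forall>d\<in>divisors_set n. f d \<in> divisors_set m) \<and>
     (\<forall>d\<in>divisors_set n. f d \<le> d) \<and>
     (\<forall>d\<in>divisors_set n.
        (real (m div f d) / real (n div d))
          \<le> min 1 (real (least_pf (m div f d)) / real (least_pf (n div d)))) \<and>
     (\<forall>d\<in>divisors_set n. \<forall>d'\<in>divisors_set n.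
        (\<exists>i::int. real (f d) = 2 powi i * real (f d')) \<longrightarrow>
        (\<exists>j::int. real d = 2 powi j * real d'))"

definition reduces_to :: "nat \<Rightarrow> nat \<Rightarrow> bool" where
  "reduces_to n m \<longleftrightarrow> (\<exists>f. reducing n m f)"

end

theory Submission
  imports Defs
begin

lemma pow_ge1:
  fixes p :: nat
  assumes "prime p"
  shows "p^x \<ge> 1" and "x > 0 \<Longrightarrow> p^x > 1"
proof -
  have "p > 1" using assms prime_gt_1_nat by blast
  then show "p^x \<ge> 1" by simp
  show "x > 0 \<Longrightarrow> p^x > 1" using \<open>p > 1\<close> by (metis one_less_power)
qed

lemma one_lt_mult_nat:
  fixes u v :: nat
  shows "1 < u \<Longrightarrow> 1 \<le> v \<Longrightarrow> 1 < u * v" and "1 \<le> u \<Longrightarrow> 1 < v \<Longrightarrow> 1 < u * v"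
proof -
  assume "1 < u" "1 \<le> v"
  then have "u * 1 \<le> u * v" by (intro mult_le_mono2)
  then show "1 < u * v" using \<open>1 < u\<close> by linarith
next
  assume "1 \<le> u" "1 < v"
  then have "1 * v \<le> u * v" by (intro mult_le_mono1)
  then show "1 < u * v" using \<open>1 < v\<close> by linarith
qed

lemma mult_pq:
  fixes p q :: nat
  assumes "prime p" "prime q" "p \<noteq> q"
  shows "multiplicity p (p^i * q^j) = i"
proof -
  have "p^i \<noteq> 0" "q^j \<noteq> 0" using assms prime_gt_0_nat by auto
  then have "multiplicity p (p^i * q^j) = multiplicity p (p^i) + multiplicity p (q^j)"
    using assms by (simp add: prime_elem_multiplicity_mult_distrib)
  then show ?thesis using assms multiplicity_distinct_prime_power by simp
qed

lemma lpf_basic: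
  fixes n :: nat
  assumes "n > 1"
  shows "prime (least_pf n) \<and> least_pf n dvd n \<and> (\<forall>r. prime r \<and> r dvd n \<longrightarrow> least_pf n \<le> r)"
proof -
  obtain r where r: "prime r" "r dvd n" using assms prime_factor_nat[of n] by auto
  have "least_pf n = (LEAST p. prime p \<and> p dvd n)" using assms by (simp add: least_pf_def)
  then show ?thesis using r LeastI[of "\<lambda>p. prime p \<and> p dvd n" r] Least_le[of "\<lambda>p. prime p \<and> p dvd n"]
    by auto
qed

lemma prime_dvd_pq:
  fixes p q r :: nat
  assumes "prime p" "prime q" "prime r" "r dvd p^x * q^y"
  shows "(r = p \<and> x > 0) \<or> (r = q \<and> y > 0)"
proof -
  have "r dvd p^x \<or> r dvd q^y" using assms prime_dvd_mult_iff by blast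
  then show ?thesis
  proof
    assume h: "r dvd p^x"
    have "x > 0" using h assms(3) by (metis gr0I power_0 nat_dvd_1_iff_1 not_prime_1)
    moreover have "r dvd p" using h assms(3) prime_dvd_power by blast
    ultimately show ?thesis using assms primes_dvd_imp_eq by blast
  next
    assume h: "r dvd q^y"
    have "y > 0" using h assms(3) by (metis gr0I power_0 nat_dvd_1_iff_1 not_prime_1)
    moreover have "r dvd q" using h assms(3) prime_dvd_power by blast
    ultimately show ?thesis using assms primes_dvd_imp_eq by blast
  qed
qed

lemma lpf_lower:
  fixes p q :: nat
  assumes "prime p" "prime q" "x > 0 \<or> y > 0"
  shows "least_pf (p^x * q^y) \<ge> min p q"
proof -
  have a: "p^x \<ge> 1" "q^y \<ge> 1" using assms pow_ge1 by auto
  have "p^x > 1 \<or> q^y > 1" using assms pow_ge1 by auto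
  then have "p^x * q^y > 1"
  proof
    assume "p^x > 1" then show ?thesis using a
      using one_lt_mult_nat by blast
  next
    assume "q^y > 1" then show ?thesis using a
      using one_lt_mult_nat by blast
  qed
  then have "prime (least_pf (p^x * q^y))" "least_pf (p^x * q^y) dvd p^x * q^y"
    using lpf_basic by blast+
  then have "least_pf (p^x * q^y) = p \<or> least_pf (p^x * q^y) = q"
    using prime_dvd_pq[OF assms(1,2)] by blast
  then show ?thesis by linarith
qed

lemma lpf_upper:
  fixes p q :: nat
  assumes "prime p" "prime q" "x > 0"
  shows "least_pf (p^x * q^y) \<le> p"
proof -
  have a: "p^x > 1" "q^y \<ge> 1" using assms pow_ge1 by auto
  then have "p^x * q^y > 1"
    using one_lt_mult_nat by blast
  moreover have "p dvd p^x * q^y" using assms by (simp add: dvd_power)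
  ultimately show ?thesis using lpf_basic[of "p^x * q^y"] assms(1) by simp
qed

lemma lpf_pos: "least_pf n > 0"
proof (cases "n > 1")
  case True then show ?thesis using lpf_basic[OF True] prime_gt_0_nat by blast
next
  case False then show ?thesis by (simp add: least_pf_def)
qed

lemma div_pq:
  fixes p q :: nat
  assumes "prime p" "prime q" "i \<le> a" "j \<le> b"
  shows "(p^a * q^b) div (p^i * q^j) = p^(a-i) * q^(b-j)"
proof -
  have "p^a * q^b = (p^i * q^j) * (p^(a-i) * q^(b-j))"
    using assms by (simp add: power_add[symmetric] algebra_simps)
  moreover have "p^i * q^j \<noteq> 0" using assms prime_gt_0_nat by simp
  ultimately show ?thesis by simp
qed

lemma ratio_ok:
  fixes g e P q lg le :: nat
  assumes "g * P = e * q" "q < P" "q * le \<le> lg * P" "e > 0" "le > 0"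
  shows "real g / real e \<le> min 1 (real lg / real le)"
proof -
  have "g * P < e * P" using assms by simp
  then have "g \<le> e" by simp
  have e1: "g * le * P = e * (q * le)" using assms(1)
    by (metis mult.assoc mult.commute)
  have e2: "e * (q * le) \<le> e * (lg * P)" using assms(3) by (rule mult_le_mono2)
  have e3: "e * (lg * P) = (lg * e) * P" by (simp add: ac_simps)
  have "g * le * P \<le> (lg * e) * P" using e1 e2 e3 by linarith
  then have "g * le \<le> lg * e" using assms(2) by simp
  then have h: "real g * real le \<le> real lg * real e" by (metis of_nat_le_iff of_nat_mult)
  have "real e > 0" "real le > 0" using assms by auto
  then have "real g / real e \<le> real lg / real le"
    using h by (simp add: divide_le_eq le_divide_eq mult.commute)
  moreover have "real g / real e \<le> 1" using \<open>g \<le> e\<close> assms by simp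
  ultimately show ?thesis by simp
qed

lemma powi_odd:
  fixes x y :: nat
  assumes "odd x" "odd y" "real x = 2 powi i * real y"
  shows "x = y"
proof (cases "i \<ge> 0")
  case True
  then obtain k where k: "i = int k" by (metis nonneg_eq_int)
  then have "real x = real (2^k * y)" using assms by (simp add: power_int_of_nat)
  then have "x = 2^k * y" by (metis of_nat_eq_iff)
  then have "k = 0" using assms by (cases k) auto
  then show ?thesis using \<open>x = 2^k * y\<close> by simp
next
  case False
  then obtain k where k: "i = - int k" by (metis nonpos_int_cases linorder_le_cases)
  have "(2::real)^k * 2 powi i = 1" using k by (simp add: power_int_minus field_simps)
  then have "real (2^k * x) = real y" using assms
    by (metis (no_types, lifting) mult.assoc mult_1 of_nat_mult of_nat_numeral of_nat_power)
  then have "2^k * x = y" by (metis of_nat_eq_iff)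
  then have "k = 0" using assms by (cases k) auto
  then show ?thesis using \<open>2^k * x = y\<close> by simp
qed

lemma mult_qpq:
  fixes p q :: nat
  assumes "prime p" "prime q" "p \<noteq> q"
  shows "multiplicity q (p^i * q^j) = j"
  using mult_pq[of q p j i] assms by (simp add: mult.commute)

lemma pq_inj:
  fixes p q :: nat
  assumes "prime p" "prime q" "p \<noteq> q" "p^i * q^j = p^i' * q^j'"
  shows "i = i' \<and> j = j'"
proof
  have "multiplicity p (p^i * q^j) = multiplicity p (p^i' * q^j')" using assms(4) by simp
  then show "i = i'" using mult_pq[OF assms(1-3)] by simp
  have "multiplicity q (p^i * q^j) = multiplicity q (p^i' * q^j')" using assms(4) by simp
  then show "j = j'" using mult_qpq[OF assms(1-3)] by simp
qed

lemma divs_pq: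
  fixes p q :: nat
  assumes "prime p" "prime q" "d dvd p^a * q^b"
  shows "\<exists>i\<le>a. \<exists>j\<le>b. d = p^i * q^j"
proof -
  obtain d1 d2 where "d = d1 * d2" "d1 dvd p^a" "d2 dvd q^b"
    using division_decomp[OF assms(3)] by blast
  moreover obtain i where "i \<le> a" "d1 = p^i" using \<open>d1 dvd p^a\<close> divides_primepow_nat[OF assms(1)] by auto
  moreover obtain j where "j \<le> b" "d2 = q^j" using \<open>d2 dvd q^b\<close> divides_primepow_nat[OF assms(2)] by auto
  ultimately show ?thesis by blast
qed

lemma odd_pq:
  fixes p q :: nat
  assumes "odd p" "odd q"
  shows "odd (p^i * q^j)"
  using assms by simp

lemma t1_aux:
  fixes a b c i j :: nat
  assumes "j \<le> b" "a < i + c * (j + 1)" "c * (b + 2) \<le> a + 1"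
  shows "c \<le> i"
proof -
  have h1: "c * j \<le> c * b" using assms by simp
  have h2: "c * (j + 1) = c * j + c" by (simp only: distrib_left mult_1_right)
  have h3: "c * (b + 2) = c * b + 2 * c" by (simp only: distrib_left mult.commute)
  show ?thesis using assms h1 h2 h3 by linarith
qed

theorem lemma3p8:
  fixes p q a b :: nat
  assumes "prime p" and "prime q" and "odd p" and "odd q" and "p \<noteq> q"
    and "q < p ^ ((a + 1) div (b + 2))"
  shows "reduces_to (p ^ a * q ^ b) (p ^ (a - (a + 1) div (b + 2)) * q ^ (b + 1))"
proof -
  define c where "c = (a + 1) div (b + 2)"
  define n where "n = p ^ a * q ^ b"
  define m where "m = p ^ (a - c) * q ^ (b + 1)"
  have pc: "q < p ^ c" using assms(6) c_def by simp
  have q1: "q > 1" using assms(2) prime_gt_1_nat by blast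
  have p1: "p > 1" using assms(1) prime_gt_1_nat by blast
  have c1: "c \<ge> 1"
  proof (rule ccontr)
    assume "\<not> c \<ge> 1" then have "c = 0" by simp
    then show False using pc q1 by simp
  qed
  have cb: "c * (b + 2) \<le> a + 1" unfolding c_def by (rule div_times_less_eq_dividend)
  define f where "f d = (if a < multiplicity p d + c * (multiplicity q d + 1)
      then p ^ (multiplicity p d - c) * q ^ (multiplicity q d + 1) else d)" for d
  have fv: "f (p^i * q^j) = (if a < i + c * (j + 1) then p ^ (i - c) * q ^ (j + 1) else p^i * q^j)" for i j
    unfolding f_def using mult_pq[OF assms(1,2,5)] mult_qpq[OF assms(1,2,5)] by simp
  have pos: "p^i * q^j > 0" for i j using p1 q1 by simp
  have divn: "d \<in> divisors_set n \<Longrightarrow> \<exists>i\<le>a. \<exists>j\<le>b. d = p^i * q^j" for d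
    using divs_pq[OF assms(1,2)] unfolding divisors_set_def n_def by blast
  have t1_ic: "c \<le> i" if "j \<le> b" "a < i + c * (j + 1)" for i j
    using t1_aux[OF that cb] .
  have t2_i: "i + c \<le> a" if "\<not> a < i + c * (j + 1)" for i j
  proof -
    have "c \<le> c * (j + 1)" by simp
    then show ?thesis using that by linarith
  qed
  have odd_n: "odd n" unfolding n_def using assms(3,4) by simp
  have odd_m: "odd m" unfolding m_def using assms(3,4) by simp
  have prop1: "f d \<in> divisors_set m \<and> f d \<le> d \<and>
      real (m div f d) / real (n div d)
          \<le> min 1 (real (least_pf (m div f d)) / real (least_pf (n div d)))"
    if "i \<le> a" "j \<le> b" "d = p^i * q^j" for d i j
  proof (cases "a < i + c * (j + 1)")
    case True
    have ic: "c \<le> i" using t1_ic[OF that(2) True] .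
    have fd: "f d = p ^ (i - c) * q ^ (j + 1)" using fv True that(3) by simp
    have dv: "f d dvd m" unfolding fd m_def
      by (intro mult_dvd_mono le_imp_power_dvd) (use that ic in auto)
    have "p ^ (i - c) * q ^ (j + 1) \<le> p ^ (i - c) * p ^ c * q ^ j"
    proof -
      have "q ^ (j + 1) = q * q ^ j" by simp
      also have "\<dots> \<le> p ^ c * q ^ j" using pc by simp
      finally show ?thesis by (simp add: mult.assoc)
    qed
    also have "\<dots> = d" using that(3) ic by (simp add: power_add[symmetric])
    finally have le: "f d \<le> d" using fd by simp
    have "m div f d = p ^ (a - c - (i - c)) * q ^ (b + 1 - (j + 1))"
      unfolding fd m_def by (rule div_pq) (use assms that ic in auto)
    also have "\<dots> = p ^ (a - i) * q ^ (b - j)" using ic that by simp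
    also have "\<dots> = n div d" unfolding n_def that(3) by (rule div_pq[symmetric]) (use assms that in auto)
    finally have eq: "m div f d = n div d" .
    have "n div d > 0" using that pos div_pq[OF assms(1,2) that(1,2)] n_def p1 q1 by simp
    then have "real (m div f d) / real (n div d)
          \<le> min 1 (real (least_pf (m div f d)) / real (least_pf (n div d)))"
      using eq lpf_pos[of "n div d"] by simp
    moreover have "f d > 0" unfolding fd by (rule pos)
    ultimately show ?thesis using dv le unfolding divisors_set_def by simp
  next
    case False
    have ic: "i + c \<le> a" using t2_i[OF False] .
    have fd: "f d = d" using fv False that(3) by simp
    have dv: "f d dvd m" unfolding fd unfolding m_def that(3)
      by (intro mult_dvd_mono le_imp_power_dvd) (use that ic in auto)
    define g where "g = p ^ (a - c - i) * q ^ (b + 1 - j)"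
    define e where "e = p ^ (a - i) * q ^ (b - j)"
    have gd: "m div f d = g" unfolding fd unfolding m_def g_def that(3) by (rule div_pq) (use assms that ic in auto)
    have ed: "n div d = e" unfolding e_def n_def that(3) by (rule div_pq) (use assms that in auto)
    have "g * p ^ c = p ^ (a - c - i + c) * q ^ (b + 1 - j)" unfolding g_def
      by (simp add: power_add ac_simps)
    also have "\<dots> = p ^ (a - i) * q ^ (Suc (b - j))" using ic that by (simp add: Suc_diff_le)
    also have "\<dots> = e * q" unfolding e_def by (simp add: ac_simps)
    finally have gpe: "g * p ^ c = e * q" .
    have lg: "least_pf g \<ge> min p q" unfolding g_def by (rule lpf_lower) (use assms that in auto)
    have le: "least_pf e \<le> p" unfolding e_def by (rule lpf_upper) (use assms that ic c1 in auto)
    have pcp: "p \<le> p ^ c" using c1 p1 by (metis power_increasing power_one_right less_imp_le)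
    have key: "q * least_pf e \<le> least_pf g * p ^ c"
    proof (cases "q \<le> p")
      case True
      then have "min p q = q" by simp
      then have "q \<le> least_pf g" using lg by simp
      have "q * least_pf e \<le> q * p" using le by simp
      also have "\<dots> \<le> least_pf g * p ^ c" using \<open>q \<le> least_pf g\<close> pcp by (rule mult_le_mono)
      finally show ?thesis .
    next
      case False
      then have "p \<le> least_pf g" using lg by simp
      have "q * least_pf e \<le> q * p" using le by simp
      also have "\<dots> \<le> p ^ c * least_pf g" using pc \<open>p \<le> least_pf g\<close> by (intro mult_le_mono) auto
      finally show ?thesis by (simp add: mult.commute)
    qed
    have "real g / real e \<le> min 1 (real (least_pf g) / real (least_pf e))"
      by (rule ratio_ok[OF gpe pc key]) (use pos lpf_pos e_def in auto)
    moreover have "f d > 0" using fd pos that by simp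
    ultimately show ?thesis using dv fd gd ed unfolding divisors_set_def by simp
  qed
  have finj: "d = d'" if H: "d \<in> divisors_set n" "d' \<in> divisors_set n" "f d = f d'" for d d'
  proof -
    obtain i j where ij: "i \<le> a" "j \<le> b" "d = p^i * q^j" using divn[OF H(1)] by blast
    obtain i' j' where ij': "i' \<le> a" "j' \<le> b" "d' = p^i' * q^j'" using divn[OF H(2)] by blast
    have inj: "x = x' \<and> y = y'" if "p^x * q^y = p^x' * q^y'" for x y x' y'
      using pq_inj[OF assms(1,2,5) that] .
    have fd1: "f d = (if a < i + c * (j + 1) then p ^ (i - c) * q ^ (j + 1) else p^i * q^j)"
      using fv ij(3) by simp
    have fd2: "f d' = (if a < i' + c * (j' + 1) then p ^ (i' - c) * q ^ (j' + 1) else p^i' * q^j')"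
      using fv ij'(3) by simp
    show ?thesis
    proof (cases "a < i + c * (j + 1)")
      case A: True
      have ci: "c \<le> i" using t1_ic[OF ij(2) A] .
      show ?thesis
      proof (cases "a < i' + c * (j' + 1)")
        case B: True
        have ci': "c \<le> i'" using t1_ic[OF ij'(2) B] .
        have "p ^ (i - c) * q ^ (j + 1) = p ^ (i' - c) * q ^ (j' + 1)"
          using H(3) fd1 fd2 A B by simp
        from inj[OF this] have "i - c = i' - c" "j = j'" by simp_all
        then have "i = i'" using ci ci' by linarith
        then show ?thesis using \<open>j = j'\<close> ij(3) ij'(3) by simp
      next
        case B: False
        have "p ^ (i - c) * q ^ (j + 1) = p ^ i' * q ^ j'"
          using H(3) fd1 fd2 A B by simp
        from inj[OF this] have "i - c = i'" "j + 1 = j'" by simp_all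
        then have "i' + c * (j' + 1) = i + c * (j + 1)" using ci by (simp add: algebra_simps)
        then show ?thesis using A B by simp
      qed
    next
      case A: False
      show ?thesis
      proof (cases "a < i' + c * (j' + 1)")
        case B: True
        have ci': "c \<le> i'" using t1_ic[OF ij'(2) B] .
        have "p ^ (i' - c) * q ^ (j' + 1) = p ^ i * q ^ j"
          using H(3) fd1 fd2 A B by simp
        from inj[OF this] have "i' - c = i" "j' + 1 = j" by simp_all
        then have "i' + c * (j' + 1) = i + c * (j + 1)" using ci' by (simp add: algebra_simps)
        then show ?thesis using A B by simp
      next
        case B: False
        show ?thesis using H(3) fd1 fd2 A B ij ij' by simp
      qed
    qed
  qed
  have oddm: "odd x" if "x \<in> divisors_set m" for x
  proof
    assume "even x"
    moreover have "x dvd m" using that unfolding divisors_set_def by simp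
    ultimately have "even m" by (rule dvd_trans)
    then show False using odd_m by simp
  qed
  have "reducing n m f"
    unfolding reducing_def
  proof (intro conjI ballI impI)
    fix d assume dd: "d \<in> divisors_set n"
    obtain i j where ij: "i \<le> a" "j \<le> b" "d = p^i * q^j" using divn[OF dd] by blast
    note P = prop1[OF ij]
    show "f d \<in> divisors_set m" using P by simp
    show "f d \<le> d" using P by simp
    show "real (m div f d) / real (n div d)
          \<le> min 1 (real (least_pf (m div f d)) / real (least_pf (n div d)))" using P by simp
  next
    fix d d' assume d: "d \<in> divisors_set n" and d': "d' \<in> divisors_set n"
      and "\<exists>i::int. real (f d) = 2 powi i * real (f d')"
    then obtain i :: int where i: "real (f d) = 2 powi i * real (f d')" by blast
    obtain i1 j1 where A: "i1 \<le> a" "j1 \<le> b" "d = p^i1 * q^j1" using divn[OF d] by blast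
    obtain i2 j2 where B: "i2 \<le> a" "j2 \<le> b" "d' = p^i2 * q^j2" using divn[OF d'] by blast
    have "odd (f d)" "odd (f d')" using oddm prop1[OF A] prop1[OF B] by auto
    then have "f d = f d'" using powi_odd i by blast
    then have "d = d'" using finj d d' by blast
    then show "\<exists>j::int. real d = 2 powi j * real d'" by (intro exI[of _ 0]) simp
  qed
  then show ?thesis unfolding reduces_to_def n_def m_def c_def by blast
qed

end
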